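(* Let $\mathbb{R}^n_s$ be $\mathbb{R}^n$ with a non-degenerate symmetric bilinear form $\langle\cdot,\cdot\rangle$ of signature $(n-s,s)$, let $G\subset\mathrm{Iso}(\mathbb{R}^n_s)$ be a real Zariski-closed subgroup whose centralizer in $\mathrm{Iso}(\mathbb{R}^n_s)$ acts transitively on $\mathbb{R}^n$, and let $\mathfrak{g}$ be its Lie algebra with the symmetric bilinear form $(\cdot,\cdot)$ induced by the orbit metric. Assume there exist $Z\in[\mathfrak{g},\mathfrak{g}]$ and $Z^*\in\mathfrak{g}$ with $(Z,Z^* )\neq0$. Then $Z^*\notin\mathfrak{z}(\mathfrak{g})$.
   Context: Elements of $\mathfrak{g}$ are written $(A,v)$ (matrices $\begin{pmatrix}A&v\\0&0\end{pmatrix}$). For fixed $p\in\mathbb{R}^n$, the orbit metric form on $\mathfrak{g}$ is $(X,Y)=\langle A_Xp+v_X,\,A_Yp+v_Y\rangle$, i.e. the pullback of $\langle\cdot,\cdot\rangle$ on the orbit $G.p$ via the orbit map; it satisfies $([X,Y],Z)=-(Y,[X,Z])$. $\mathfrak{z}(\mathfrak{g})$ denotes the center of $\mathfrak{g}$. *)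

theory Defs
  imports "HOL-Analysis.Analysis"
begin

text \<open>Affine maps of R^n: a pair (A, v) stands for the map x \<mapsto> A x + v, i.e. the
  (n+1)x(n+1) matrix with blocks A, v, 0, 1. Lie algebra elements (A, v) stand for
  the matrix with blocks A, v, 0, 0.\<close>

type_synonym 'n aff = "(real^'n^'n) \<times> (real^'n)"

definition aff_apply :: "'n::finite aff \<Rightarrow> real^'n \<Rightarrow> real^'n" where
  "aff_apply g x = fst g *v x + snd g"

definition aff_mult :: "'n::finite aff \<Rightarrow> 'n aff \<Rightarrow> 'n aff" where
  "aff_mult g h = (fst g ** fst h, fst g *v snd h + snd g)"

definition aff_id :: "'n::finite aff" where
  "aff_id = (mat 1, 0)"

definition aff_inv :: "'n::finite aff \<Rightarrow> 'n aff" where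
  "aff_inv g = (matrix_inv (fst g), - (matrix_inv (fst g) *v snd g))"

definition form :: "real^'n^'n \<Rightarrow> real^'n \<Rightarrow> real^'n \<Rightarrow> real" where
  "form Q x y = x \<bullet> (Q *v y)"

definition nondeg_sym :: "real^'n^'n \<Rightarrow> bool" where
  "nondeg_sym Q \<longleftrightarrow> transpose Q = Q \<and> invertible Q"

definition iso_group :: "real^'n^'n \<Rightarrow> 'n::finite aff set" where
  "iso_group Q = {g. transpose (fst g) ** Q ** fst g = Q}"

inductive_set poly_fun :: "('n::finite aff \<Rightarrow> real) set" where
  const: "(\<lambda>_. c) \<in> poly_fun"
| entA: "(\<lambda>g. fst g $ i $ j) \<in> poly_fun"
| entv: "(\<lambda>g. snd g $ i) \<in> poly_fun"
| add: "f \<in> poly_fun \<Longrightarrow> h \<in> poly_fun \<Longrightarrow> (\<lambda>g. f g + h g) \<in> poly_fun"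
| mult: "f \<in> poly_fun \<Longrightarrow> h \<in> poly_fun \<Longrightarrow> (\<lambda>g. f g * h g) \<in> poly_fun"

definition zariski_closed_subgroup :: "real^'n^'n \<Rightarrow> 'n::finite aff set \<Rightarrow> bool" where
  "zariski_closed_subgroup Q G \<longleftrightarrow>
     G \<subseteq> iso_group Q \<and> aff_id \<in> G \<and>
     (\<forall>g\<in>G. \<forall>h\<in>G. aff_mult g h \<in> G) \<and> (\<forall>g\<in>G. aff_inv g \<in> G) \<and>
     (\<exists>F \<subseteq> poly_fun. G = {g \<in> iso_group Q. \<forall>f\<in>F. f g = 0})"

definition centralizer :: "real^'n^'n \<Rightarrow> 'n::finite aff set \<Rightarrow> 'n aff set" where
  "centralizer Q G = {h \<in> iso_group Q. \<forall>g\<in>G. aff_mult h g = aff_mult g h}"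

definition acts_transitively :: "'n::finite aff set \<Rightarrow> bool" where
  "acts_transitively H \<longleftrightarrow> (\<forall>x y. \<exists>h\<in>H. aff_apply h x = y)"

definition lie_algebra :: "'n::finite aff set \<Rightarrow> 'n aff set" where
  "lie_algebra G = {X. \<exists>\<gamma>. (\<forall>t. \<gamma> t \<in> G) \<and> \<gamma> 0 = aff_id \<and> (\<gamma> has_vector_derivative X) (at 0)}"

definition lie_bracket :: "'n::finite aff \<Rightarrow> 'n aff \<Rightarrow> 'n aff" where
  "lie_bracket X Y = (fst X ** fst Y - fst Y ** fst X, fst X *v snd Y - fst Y *v snd X)"

definition derived_algebra :: "'n::finite aff set \<Rightarrow> 'n aff set" where
  "derived_algebra \<g> = span {lie_bracket X Y | X Y. X \<in> \<g> \<and> Y \<in> \<g>}"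

definition lie_center :: "'n::finite aff set \<Rightarrow> 'n aff set" where
  "lie_center \<g> = {Z \<in> \<g>. \<forall>X\<in>\<g>. lie_bracket X Z = 0}"

definition orbit_form :: "real^'n^'n \<Rightarrow> real^'n \<Rightarrow> 'n::finite aff \<Rightarrow> 'n aff \<Rightarrow> real" where
  "orbit_form Q p X Y = form Q (fst X *v p + snd X) (fst Y *v p + snd Y)"

end

theory Submission
  imports Defs
begin

lemma form_add_left: "form Q (x + y) z = form Q x z + form Q y z"
  by (simp add: form_def inner_add_left)
lemma form_add_right: "form Q x (y + z) = form Q x y + form Q x z"
  by (simp add: form_def inner_add_right matrix_vector_right_distrib)
lemma form_diff_left: "form Q (x - y) z = form Q x z - form Q y z"
  by (simp add: form_def inner_diff_left)
lemma form_uminus_left: "form Q (- x) z = - form Q x z"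
  by (simp add: form_def)
lemma form_uminus_right: "form Q x (- z) = - form Q x z"
  by (metis add.right_inverse add_eq_0_iff form_add_right form_def inner_zero_right matrix_vector_mult_0_right)
lemma form_zero_right[simp]: "form Q x 0 = 0"
  by (simp add: form_def)

lemma form_sym: "transpose Q = Q \<Longrightarrow> form Q x y = form Q y x"
  unfolding form_def
  by (metis dot_lmul_matrix inner_commute transpose_transpose vector_transpose_matrix)

lemma form_nd:
  assumes "invertible Q" "\<And>w. form Q w c = 0"
  shows "c = 0"
proof -
  have "(Q *v c) \<bullet> (Q *v c) = 0" using assms(2)[of "Q *v c"] by (simp add: form_def)
  hence "Q *v c = 0" by simp
  then show ?thesis using assms(1)
    by (metis invertible_def matrix_vector_mul_assoc matrix_vector_mul_lid matrix_vector_mult_0_right)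
qed

lemma orth:
  assumes "h \<in> iso_group Q"
  shows "form Q (fst h *v x) (fst h *v y) = form Q x y"
proof -
  have e: "transpose (fst h) ** Q ** fst h = Q" using assms by (simp add: iso_group_def)
  have "form Q (fst h *v x) (fst h *v y) = x \<bullet> ((transpose (fst h) ** Q ** fst h) *v y)"
    unfolding form_def
    by (metis dot_lmul_matrix matrix_vector_mul_assoc vector_transpose_matrix)
  then show ?thesis using e by (simp add: form_def)
qed

lemma bl_mv: "bounded_linear (\<lambda>M::real^'n::finite^'m::finite. M *v a)"
proof -
  have "linear (\<lambda>M::real^'n::finite^'m::finite. M *v a)"
    by (rule linearI) (auto simp: matrix_vector_mult_add_rdistrib scaleR_matrix_vector_assoc)
  then show ?thesis by (simp add: linear_conv_bounded_linear)
qed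

lemma skew:
  assumes "G \<subseteq> iso_group Q" "X \<in> lie_algebra G"
  shows "form Q (fst X *v a) b + form Q a (fst X *v b) = 0"
proof -
  obtain \<gamma> where g: "\<forall>t. \<gamma> t \<in> G" "\<gamma> 0 = aff_id" "(\<gamma> has_vector_derivative X) (at 0)"
    using assms(2) by (auto simp: lie_algebra_def)
  have d1: "((\<lambda>t. fst (\<gamma> t)) has_vector_derivative fst X) (at 0)"
    by (rule bounded_linear.has_vector_derivative[OF bounded_linear_fst g(3)])
  have da: "((\<lambda>t. fst (\<gamma> t) *v a) has_vector_derivative fst X *v a) (at 0)"
    by (rule bounded_linear.has_vector_derivative[OF bl_mv d1])
  have db: "((\<lambda>t. Q *v (fst (\<gamma> t) *v b)) has_vector_derivative Q *v (fst X *v b)) (at 0)"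
    by (rule bounded_linear.has_vector_derivative[OF matrix_vector_mul_bounded_linear
          bounded_linear.has_vector_derivative[OF bl_mv d1]])
  have dp: "((\<lambda>t. (fst (\<gamma> t) *v a) \<bullet> (Q *v (fst (\<gamma> t) *v b))) has_vector_derivative
      (fst (\<gamma> 0) *v a) \<bullet> (Q *v (fst X *v b)) + (fst X *v a) \<bullet> (Q *v (fst (\<gamma> 0) *v b))) (at 0)"
    by (rule bounded_bilinear.has_vector_derivative[OF bounded_bilinear_inner da db])
  have c: "(fst (\<gamma> t) *v a) \<bullet> (Q *v (fst (\<gamma> t) *v b)) = form Q a b" for t
    using orth[of "\<gamma> t" Q a b] g(1) assms(1) by (auto simp: form_def)
  have dc: "((\<lambda>t. (fst (\<gamma> t) *v a) \<bullet> (Q *v (fst (\<gamma> t) *v b))) has_vector_derivative 0) (at 0)"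
    unfolding c by (rule has_vector_derivative_const)
  have "(fst (\<gamma> 0) *v a) \<bullet> (Q *v (fst X *v b)) + (fst X *v a) \<bullet> (Q *v (fst (\<gamma> 0) *v b)) = 0"
    using vector_derivative_unique_at[OF dp dc] .
  then show ?thesis using g(2) by (simp add: aff_id_def form_def add.commute)
qed

lemma cent:
  assumes "X \<in> lie_algebra G" "h \<in> centralizer Q G"
  shows "fst h *v snd X = fst X *v snd h + snd X"
proof -
  obtain \<gamma> where g: "\<forall>t. \<gamma> t \<in> G" "\<gamma> 0 = aff_id" "(\<gamma> has_vector_derivative X) (at 0)"
    using assms(1) by (auto simp: lie_algebra_def)
  have e: "fst h *v snd (\<gamma> t) + snd h = fst (\<gamma> t) *v snd h + snd (\<gamma> t)" for t
  proof -
    have "aff_mult h (\<gamma> t) = aff_mult (\<gamma> t) h"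
      using assms(2) g(1) unfolding centralizer_def by auto
    then show ?thesis unfolding aff_mult_def by (metis snd_conv)
  qed
  have d1: "((\<lambda>t. fst (\<gamma> t)) has_vector_derivative fst X) (at 0)"
    by (rule bounded_linear.has_vector_derivative[OF bounded_linear_fst g(3)])
  have d2: "((\<lambda>t. snd (\<gamma> t)) has_vector_derivative snd X) (at 0)"
    by (rule bounded_linear.has_vector_derivative[OF bounded_linear_snd g(3)])
  have dl: "((\<lambda>t. fst h *v snd (\<gamma> t) + snd h) has_vector_derivative fst h *v snd X + 0) (at 0)"
    by (intro has_vector_derivative_add has_vector_derivative_const
        bounded_linear.has_vector_derivative[OF matrix_vector_mul_bounded_linear d2])
  have dr: "((\<lambda>t. fst h *v snd (\<gamma> t) + snd h) has_vector_derivative fst X *v snd h + snd X) (at 0)"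
    unfolding e
    by (intro has_vector_derivative_add d2 bounded_linear.has_vector_derivative[OF bl_mv d1])
  show ?thesis using vector_derivative_unique_at[OF dl dr] by simp
qed

lemma mv_uminus: "(A::real^'n::finite^'m::finite) *v (- w) = - (A *v w)"
  by (metis diff_0 matrix_vector_mult_diff_distrib matrix_vector_mult_0_right)

lemma bident:
  assumes "acts_transitively (centralizer Q G)" "X \<in> lie_algebra G" "Y \<in> lie_algebra G"
  shows "form Q (fst X *v w + snd X) (fst Y *v w + snd Y) = form Q (snd X) (snd Y)"
proof -
  obtain h where h: "h \<in> centralizer Q G" "aff_apply h 0 = w"
    using assms(1) unfolding acts_transitively_def by blast
  have w: "snd h = w" using h(2) by (simp add: aff_apply_def)
  have hi: "h \<in> iso_group Q" using h(1) by (simp add: centralizer_def)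
  show ?thesis
    using orth[OF hi, of "snd X" "snd Y"] cent[OF assms(2) h(1)] cent[OF assms(3) h(1)] w by simp
qed

lemma linquad:
  assumes "acts_transitively (centralizer Q G)" "X \<in> lie_algebra G" "Y \<in> lie_algebra G"
  shows "form Q (fst X *v w) (fst Y *v w) = 0"
    and "form Q (fst X *v w) (snd Y) + form Q (snd X) (fst Y *v w) = 0"
proof -
  let ?a = "fst X *v w" and ?b = "fst Y *v w"
  have e1: "form Q (?a + snd X) (?b + snd Y) = form Q (snd X) (snd Y)"
    using bident[OF assms] .
  have e2: "form Q (- ?a + snd X) (- ?b + snd Y) = form Q (snd X) (snd Y)"
    using bident[OF assms, of "- w"] by (simp add: mv_uminus)
  note ex = form_add_left form_add_right form_uminus_left form_uminus_right
  from e1 e2 show "form Q ?a ?b = 0" and "form Q ?a (snd Y) + form Q (snd X) ?b = 0"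
    unfolding ex by linarith+
qed

lemma anticomm:
  assumes "nondeg_sym Q" "zariski_closed_subgroup Q G"
    "acts_transitively (centralizer Q G)" "X \<in> lie_algebra G" "Y \<in> lie_algebra G"
  shows "fst X *v (fst Y *v b) + fst Y *v (fst X *v b) = 0"
    and "fst X *v snd Y + fst Y *v snd X = 0"
proof -
  have Gi: "G \<subseteq> iso_group Q" using assms(2) by (simp add: zariski_closed_subgroup_def)
  have sym: "transpose Q = Q" and inv: "invertible Q" using assms(1) by (auto simp: nondeg_sym_def)
  note sk = skew[OF Gi]
  note fs = form_sym[OF sym]
  show "fst X *v (fst Y *v b) + fst Y *v (fst X *v b) = 0"
  proof (rule form_nd[OF inv])
    fix a
    have q: "form Q (fst X *v (a + b)) (fst Y *v (a + b)) = 0"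
      "form Q (fst X *v a) (fst Y *v a) = 0" "form Q (fst X *v b) (fst Y *v b) = 0"
      using linquad(1)[OF assms(3-5)] by auto
    hence c: "form Q (fst X *v a) (fst Y *v b) + form Q (fst X *v b) (fst Y *v a) = 0"
      unfolding matrix_vector_right_distrib form_add_left form_add_right by linarith
    have s1: "form Q (fst X *v a) (fst Y *v b) = - form Q a (fst X *v (fst Y *v b))"
      using sk[OF assms(4), of a "fst Y *v b"] by linarith
    have s2: "form Q (fst X *v b) (fst Y *v a) = - form Q a (fst Y *v (fst X *v b))"
      using sk[OF assms(5), of a "fst X *v b"] fs[of "fst X *v b" "fst Y *v a"] by linarith
    show "form Q a (fst X *v (fst Y *v b) + fst Y *v (fst X *v b)) = 0"
      using c s1 s2 unfolding form_add_right by linarith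
  qed
  show "fst X *v snd Y + fst Y *v snd X = 0"
  proof (rule form_nd[OF inv])
    fix a
    have c: "form Q (fst X *v a) (snd Y) + form Q (snd X) (fst Y *v a) = 0"
      using linquad(2)[OF assms(3-5)] .
    have s1: "form Q (fst X *v a) (snd Y) = - form Q a (fst X *v snd Y)"
      using sk[OF assms(4), of a "snd Y"] by linarith
    have s2: "form Q (snd X) (fst Y *v a) = - form Q a (fst Y *v snd X)"
      using sk[OF assms(5), of a "snd X"] fs[of "snd X" "fst Y *v a"] by linarith
    show "form Q a (fst X *v snd Y + fst Y *v snd X) = 0"
      using c s1 s2 unfolding form_add_right by linarith
  qed
qed

lemma form_scale_left: "form Q (c *\<^sub>R x) y = c * form Q x y"
  by (simp add: form_def)

lemma self_add_zero: "(t::real^'n) + t = 0 \<Longrightarrow> t = 0"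
  by (metis scaleR_2 scaleR_eq_0_iff zero_neq_numeral)

theorem corollary4p8:
  fixes Q :: "real^'n^'n" and G :: "'n::finite aff set" and p :: "real^'n"
    and Z Zs :: "'n aff"
  assumes "nondeg_sym Q"
    and "zariski_closed_subgroup Q G"
    and "acts_transitively (centralizer Q G)"
    and "Z \<in> derived_algebra (lie_algebra G)"
    and "Zs \<in> lie_algebra G"
    and "orbit_form Q p Z Zs \<noteq> 0"
  shows "Zs \<notin> lie_center (lie_algebra G)"
proof
  assume c: "Zs \<in> lie_center (lie_algebra G)"
  have Gi: "G \<subseteq> iso_group Q" using assms(2) by (simp add: zariski_closed_subgroup_def)
  have sym: "transpose Q = Q" using assms(1) by (auto simp: nondeg_sym_def)
  have cz: "\<And>X. X \<in> lie_algebra G \<Longrightarrow> lie_bracket X Zs = 0"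
    using c by (simp add: lie_center_def)
  define u where "u x = fst x *v p + snd x" for x :: "'n aff"
  have kill: "fst X *v u Zs = 0" if X: "X \<in> lie_algebra G" for X
  proof -
    have b: "lie_bracket X Zs = 0" using cz[OF X] .
    have m: "fst X ** fst Zs = fst Zs ** fst X" and v: "fst X *v snd Zs = fst Zs *v snd X"
      using b by (auto simp: lie_bracket_def zero_prod_def)
    have a1: "fst X *v (fst Zs *v p) + fst Zs *v (fst X *v p) = 0"
      and a2: "fst X *v snd Zs + fst Zs *v snd X = 0"
      using anticomm[OF assms(1-3) X assms(5)] by auto
    have m': "fst X *v (fst Zs *v p) = fst Zs *v (fst X *v p)"
      using m by (simp add: matrix_vector_mul_assoc)
    have "fst X *v (fst Zs *v p) = 0" using a1 m' self_add_zero by metis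
    moreover have "fst X *v snd Zs = 0" using a2 v self_add_zero by metis
    ultimately show ?thesis by (simp add: u_def matrix_vector_right_distrib)
  qed
  have br: "orbit_form Q p (lie_bracket X Y) Zs = 0"
    if X: "X \<in> lie_algebra G" and Y: "Y \<in> lie_algebra G" for X Y
  proof -
    have e: "u (lie_bracket X Y) = fst X *v u Y - fst Y *v u X"
      by (simp add: lie_bracket_def u_def algebra_simps matrix_vector_mul_assoc)
    have "orbit_form Q p (lie_bracket X Y) Zs = form Q (fst X *v u Y) (u Zs) - form Q (fst Y *v u X) (u Zs)"
      unfolding orbit_form_def u_def[symmetric] e form_diff_left ..
    also have "\<dots> = 0"
      using skew[OF Gi X, of "u Y" "u Zs"] skew[OF Gi Y, of "u X" "u Zs"] kill[OF X] kill[OF Y]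
      by simp
    finally show ?thesis .
  qed
  have sub: "subspace {Z. orbit_form Q p Z Zs = 0}"
    unfolding subspace_def
    by (auto simp: orbit_form_def form_add_left form_scale_left matrix_vector_mult_add_rdistrib
        scaleR_matrix_vector_assoc[symmetric] scaleR_right_distrib[symmetric] form_def
        inner_add_left add.assoc[symmetric] add.left_commute add.commute distrib_left[symmetric])
  have "orbit_form Q p Z Zs = 0"
    using assms(4) unfolding derived_algebra_def
  proof (induct rule: span_induct)
    case base show ?case using sub by simp
  next
    case (step x) then show ?case using br by auto
  qed
  then show False using assms(6) by simp
qed

end
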